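(* Let $\mathbf{w}^t\in\mathbb{R}^d$, let $\theta_1^t\le\theta_2^t\le\dots\le\theta_{K-1}^t$ be real thresholds, let $\mathbf{x}^t\in\mathbb{R}^d$ and let $1\le y_l^t\le y_r^t\le K$ be integers. Let $(\mathbf{w}^{t+1},\boldsymbol\theta^{t+1})$ be the PA update, i.e. the unique minimizer over $\mathbf{w}\in\mathbb{R}^d,\boldsymbol\theta\in\mathbb{R}^{K-1}$ of $$\tfrac12\Vert\mathbf{w}-\mathbf{w}^t\Vert^2+\tfrac12\Vert\boldsymbol\theta-\boldsymbol\theta^t\Vert^2$$ subject to $\mathbf{w}\cdot\mathbf{x}^t-\theta_i\ge 1$ for $i=1,\dots,y_l^t-1$ and $\mathbf{w}\cdot\mathbf{x}^t-\theta_i\le -1$ for $i=y_r^t,\dots,K-1$. Then $\theta_1^{t+1}\le\theta_2^{t+1}\le\dots\le\theta_{K-1}^{t+1}$.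
   Context: Online ranking into $K$ ordered classes: a ranker is $(\mathbf{w},\boldsymbol\theta)$ with $\boldsymbol\theta=(\theta_1,\dots,\theta_{K-1})$, predicting $h(\mathbf{x})=\min\{i\in\{1,\dots,K\}:\mathbf{w}\cdot\mathbf{x}-\theta_i<0\}$ with $\theta_K=\infty$. At trial $t$ an example $\mathbf{x}^t$ with interval label $[y_l^t,y_r^t]$ is received and the passive-aggressive (PA) algorithm updates $(\mathbf{w}^t,\boldsymbol\theta^t)$ to the exact solution of the stated quadratic program. *)

theory Defs
  imports "HOL-Analysis.Analysis"
begin

text \<open>Thresholds theta_1..theta_{K-1} are represented as a function nat => real;
only the values at indices 1..K-1 are meaningful.\<close>

definition pa_feasible ::
  "nat \<Rightarrow> real^'d \<Rightarrow> nat \<Rightarrow> nat \<Rightarrow> real^'d \<Rightarrow> (nat \<Rightarrow> real) \<Rightarrow> bool" where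
  "pa_feasible K x yl yr w \<theta> \<longleftrightarrow>
     (\<forall>i. 1 \<le> i \<and> i \<le> yl - 1 \<longrightarrow> w \<bullet> x - \<theta> i \<ge> 1) \<and>
     (\<forall>i. yr \<le> i \<and> i \<le> K - 1 \<longrightarrow> w \<bullet> x - \<theta> i \<le> -1)"

definition pa_objective ::
  "nat \<Rightarrow> real^'d \<Rightarrow> (nat \<Rightarrow> real) \<Rightarrow> real^'d \<Rightarrow> (nat \<Rightarrow> real) \<Rightarrow> real" where
  "pa_objective K wt \<theta>t w \<theta> =
     (1/2) * (norm (w - wt))\<^sup>2 + (1/2) * (\<Sum>i=1..K-1. (\<theta> i - \<theta>t i)\<^sup>2)"

definition pa_update ::
  "nat \<Rightarrow> real^'d \<Rightarrow> (nat \<Rightarrow> real) \<Rightarrow> real^'d \<Rightarrow> nat \<Rightarrow> nat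
     \<Rightarrow> real^'d \<Rightarrow> (nat \<Rightarrow> real) \<Rightarrow> bool" where
  "pa_update K wt \<theta>t x yl yr w' \<theta>' \<longleftrightarrow>
     pa_feasible K x yl yr w' \<theta>' \<and>
     (\<forall>w \<theta>. pa_feasible K x yl yr w \<theta> \<longrightarrow>
        pa_objective K wt \<theta>t w' \<theta>' \<le> pa_objective K wt \<theta>t w \<theta>)"

end

theory Submission
  imports Defs
begin

lemma sum_two_pts:
  fixes g :: "nat \<Rightarrow> real"
  assumes "i \<in> A" "i + 1 \<in> A" "finite A" "\<And>j. j \<in> A \<Longrightarrow> j \<noteq> i \<Longrightarrow> j \<noteq> i + 1 \<Longrightarrow> g j = 0"
  shows "sum g A = g i + g (i+1)"
proof -
  have "sum g A = sum g {i, i+1}"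
    by (rule sum.mono_neutral_right) (use assms in auto)
  then show ?thesis by simp
qed

theorem theorem1:
  fixes K yl yr :: nat and wt x w' :: "real^'d" and \<theta>t \<theta>' :: "nat \<Rightarrow> real"
  assumes mono: "\<And>i. 1 \<le> i \<Longrightarrow> i + 1 \<le> K - 1 \<Longrightarrow> \<theta>t i \<le> \<theta>t (i + 1)"
    and lab: "1 \<le> yl" "yl \<le> yr" "yr \<le> K"
    and upd: "pa_update K wt \<theta>t x yl yr w' \<theta>'"
  shows "\<forall>i. 1 \<le> i \<and> i + 1 \<le> K - 1 \<longrightarrow> \<theta>' i \<le> \<theta>' (i + 1)"
proof (intro allI impI, rule ccontr)
  fix i assume i: "1 \<le> i \<and> i + 1 \<le> K - 1" and neg: "\<not> \<theta>' i \<le> \<theta>' (i + 1)"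
  define a where "a = \<theta>' i"
  define b where "b = \<theta>' (i+1)"
  define m where "m = (a + b) / 2"
  define s where "s = w' \<bullet> x"
  define \<theta>'' where "\<theta>'' = \<theta>'(i := m, i+1 := m)"
  have ab: "b < a" using neg a_def b_def by simp
  have feas: "pa_feasible K x yl yr w' \<theta>'" and opt: "\<And>w \<theta>. pa_feasible K x yl yr w \<theta> \<Longrightarrow>
        pa_objective K wt \<theta>t w' \<theta>' \<le> pa_objective K wt \<theta>t w \<theta>"
    using upd unfolding pa_update_def by auto
  have lo: "\<And>j. 1 \<le> j \<Longrightarrow> j \<le> yl - 1 \<Longrightarrow> \<theta>' j \<le> s - 1"
    using feas unfolding pa_feasible_def s_def by force
  have hi: "\<And>j. yr \<le> j \<Longrightarrow> j \<le> K - 1 \<Longrightarrow> \<theta>' j \<ge> s + 1"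
    using feas unfolding pa_feasible_def s_def by force
  have feas2: "pa_feasible K x yl yr w' \<theta>''"
    unfolding pa_feasible_def
  proof (intro conjI allI impI)
    fix j assume j: "1 \<le> j \<and> j \<le> yl - 1"
    show "w' \<bullet> x - \<theta>'' j \<ge> 1"
    proof (cases "j = i \<or> j = i + 1")
      case True
      have "a \<le> s - 1"
      proof (cases "i \<le> yl - 1")
        case True then show ?thesis using lo i a_def by auto
      next
        case False then have "j = i + 1" "i \<ge> yr" using \<open>j = i \<or> j = i + 1\<close> j lab by auto
        then show ?thesis using j lab by auto
      qed
      then have "m \<le> s - 1" using ab m_def by simp
      then show ?thesis using True \<theta>''_def s_def by auto
    next
      case False then have "\<theta>'' j = \<theta>' j" using \<theta>''_def by simp
      moreover have "\<theta>' j \<le> s - 1" using lo j by blast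
      ultimately show ?thesis using s_def by simp
    qed
  next
    fix j assume j: "yr \<le> j \<and> j \<le> K - 1"
    show "w' \<bullet> x - \<theta>'' j \<le> -1"
    proof (cases "j = i \<or> j = i + 1")
      case True
      have "b \<ge> s + 1" using hi i b_def j True by auto
      then have "m \<ge> s + 1" using ab m_def by simp
      then show ?thesis using True \<theta>''_def s_def by auto
    next
      case False then have "\<theta>'' j = \<theta>' j" using \<theta>''_def by simp
      moreover have "\<theta>' j \<ge> s + 1" using hi j by blast
      ultimately show ?thesis using s_def by simp
    qed
  qed
  have tm: "\<theta>t i \<le> \<theta>t (i+1)" using mono i by auto
  let ?g = "\<lambda>j. (\<theta>'' j - \<theta>t j)\<^sup>2 - (\<theta>' j - \<theta>t j)\<^sup>2"
  have "(\<Sum>j=1..K-1. ?g j) = ?g i + ?g (i+1)"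
    by (rule sum_two_pts) (use i \<theta>''_def in auto)
  also have "\<dots> = (m - \<theta>t i)\<^sup>2 - (a - \<theta>t i)\<^sup>2 + ((m - \<theta>t (i+1))\<^sup>2 - (b - \<theta>t (i+1))\<^sup>2)"
    using \<theta>''_def a_def b_def by simp
  also have "\<dots> < 0"
  proof -
    define d where "d = (a - b) / 2"
    have "a = m + d" "b = m - d" using m_def d_def by auto
    have "d > 0" using ab d_def by simp
    have "(m - \<theta>t i)\<^sup>2 - (a - \<theta>t i)\<^sup>2 + ((m - \<theta>t (i+1))\<^sup>2 - (b - \<theta>t (i+1))\<^sup>2)
        = - (2*d*(\<theta>t (i+1) - \<theta>t i) + 2*d*d)"
      unfolding \<open>a = m + d\<close> \<open>b = m - d\<close> by (simp add: power2_eq_square algebra_simps)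
    moreover have "2*d*(\<theta>t (i+1) - \<theta>t i) \<ge> 0" using \<open>d > 0\<close> tm by simp
    moreover have "2*d*d > 0" using \<open>d > 0\<close> by simp
    ultimately show ?thesis by linarith
  qed
  finally have "(\<Sum>j=1..K-1. ?g j) < 0" .
  then have "(\<Sum>j=1..K-1. (\<theta>'' j - \<theta>t j)\<^sup>2) < (\<Sum>j=1..K-1. (\<theta>' j - \<theta>t j)\<^sup>2)"
    by (simp add: sum_subtractf)
  then have "pa_objective K wt \<theta>t w' \<theta>'' < pa_objective K wt \<theta>t w' \<theta>'"
    unfolding pa_objective_def by simp
  with opt[OF feas2] show False by simp
qed

end
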